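(* Let $\Delta>0$, $\gamma\in\mathbb{R}$, $\lambda>0$, $\nu$ a finite measure with $\nu(\mathbb{R})=\lambda$, and $\varphi$, $M:=\mathcal{F}^{-1}[\varphi^{-1}(-\cdot)]$, $P$ as in the context. Let $K$ be a symmetric kernel with $K\in L^1(\mathbb{R})$ and $\mathrm{supp}\,\mathcal{F}K\subseteq[-1,1]$, and $h_n\to0$. For $k=1,2$ let $g_n^{(k)}\in L^2(\mathbb{R})$ satisfy $\sup_n\sup_x|g_n^{(k)}(x)|<\infty$ and suppose $g^{(k)}:=\lim_{n\to\infty}g_n^{(k)}*K_{h_n}$ exists at every point. Then $g^{(k)}$ is finite everywhere, the limit $$\lim_{n\to\infty}\int\big(g_n^{(1)}*K_{h_n}*M\big)(x)\big(g_n^{(2)}*K_{h_n}*M\big)(x)P(dx)=\int(g^{(1)}*M)(x)(g^{(2)}*M)(x)P(dx)$$ exists, and for $k=1,2$ $$\lim_{n\to\infty}\int\big(g_n^{(k)}*K_{h_n}*M\big)(x)P(dx)=\lim_{n\to\infty}g_n^{(k)}*K_{h_n}(0)=g^{(k)}(0).$$ Furthermore, if $\nu=\nu_d+\nu_{ac}$ with $\nu_d=\sum_{j\in\mathbb{Z}\setminus\{0\}}q_j\delta_j$ ($q_j\ge0$) and $\nu_{ac}$ absolutely continuous, and for $k=1,2$, $\tilde g^{(k)}$ is a bounded function agreeing with $g^{(k)}$ everywhere except on a Lebesgue-null set disjoint from $\mathbb{Z}$, then $$\int(\tilde g^{(1)}*M)(x)(\tilde g^{(2)}*M)(x)P(d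x)=\int(g^{(1)}*M)(x)(g^{(2)}*M)(x)P(dx).$$
   Context: $\mathcal{F}\mu(u)=\int e^{iux}\mu(dx)$. $P:=e^{-\lambda\Delta}\delta_{\gamma\Delta}*\sum_{k\ge0}\nu^{*k}\Delta^k/k!$ (law of $X_\Delta$ for the compound Poisson process with drift $\gamma$ and Lévy measure $\nu$), $\varphi=\mathcal{F}P$, i.e. $\varphi(u)=\exp(\Delta(i\gamma u+\mathcal{F}\nu(u)-\lambda))$, $\varphi^{-1}=1/\varphi$, and $M=\mathcal{F}^{-1}[\varphi^{-1}(-\cdot)]:=e^{\lambda\Delta}\delta_{\gamma\Delta}*\sum_{k\ge0}\bar\nu^{*k}(-\Delta)^k/k!$ with $\bar\nu(A)=\nu(-A)$, $\nu^{*0}=\bar\nu^{*0}=\delta_0$. $K_h=h^{-1}K(\cdot/h)$; $f*\mu(x)=\int f(x-y)\mu(dy)$. *)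

theory Defs
  imports "HOL-Probability.Probability"
begin

fun conv_pow :: "real measure \<Rightarrow> nat \<Rightarrow> real measure" where
  "conv_pow nu 0 = return borel 0"
| "conv_pow nu (Suc k) = convolution nu (conv_pow nu k)"

definition reflect_measure :: "real measure \<Rightarrow> real measure" where
  "reflect_measure nu = distr nu borel uminus"

text \<open>P = exp(-lam Delta) delta_{gamma Delta} * sum_k nu^{*k} Delta^k / k!  (law of X_Delta).\<close>
definition lawP :: "real \<Rightarrow> real \<Rightarrow> real \<Rightarrow> real measure \<Rightarrow> real measure" where
  "lawP Delta gamma lam nu = measure_of UNIV (sets borel)
     (\<lambda>A. \<Sum>k. ennreal (exp (- lam * Delta) * Delta ^ k / fact k)
              * emeasure (conv_pow nu k) {y. gamma * Delta + y \<in> A})"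

text \<open>(f * M)(x) = int f(x - y) M(dy) with the signed measure
  M = exp(lam Delta) delta_{gamma Delta} * sum_k nubar^{*k} (-Delta)^k / k!.\<close>
definition convM :: "real \<Rightarrow> real \<Rightarrow> real \<Rightarrow> real measure \<Rightarrow> (real \<Rightarrow> real) \<Rightarrow> real \<Rightarrow> real" where
  "convM Delta gamma lam nu f x = exp (lam * Delta) *
     (\<Sum>k. (- Delta) ^ k / fact k *
        (\<integral>y. f (x - gamma * Delta - y) \<partial>conv_pow (reflect_measure nu) k))"

definition convfun :: "(real \<Rightarrow> real) \<Rightarrow> (real \<Rightarrow> real) \<Rightarrow> real \<Rightarrow> real" where
  "convfun f g x = (\<integral>y. f (x - y) * g y \<partial>lborel)"

definition Kh :: "(real \<Rightarrow> real) \<Rightarrow> real \<Rightarrow> real \<Rightarrow> real" where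
  "Kh K h x = K (x / h) / h"

definition fourier :: "(real \<Rightarrow> real) \<Rightarrow> real \<Rightarrow> complex" where
  "fourier f u = (\<integral>x. cis (u * x) * complex_of_real (f x) \<partial>lborel)"

end

theory Submission
  imports Defs
begin

lemma conv_pow_basic:
  assumes fin: "finite_measure mu" and s: "sets mu = sets borel"
  shows "sets (conv_pow mu k) = sets borel \<and> finite_measure (conv_pow mu k)
     \<and> emeasure (conv_pow mu k) UNIV = emeasure mu UNIV ^ k"
proof (induction k)
  case 0
  have "prob_space (return borel (0::real))" by (rule prob_space_return) simp
  then show ?case by (auto simp: prob_space_def)
next
  case (Suc k)
  have sp: "space mu = UNIV" using sets_eq_imp_space_eq[OF s] by simp
  have spk: "space (conv_pow mu k) = UNIV" using Suc sets_eq_imp_space_eq[of "conv_pow mu k" borel] by simp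
  have "emeasure (conv_pow mu (Suc k)) UNIV = (\<integral>\<^sup>+x. emeasure (conv_pow mu k) {a. a + x \<in> UNIV} \<partial>mu)"
    using Suc fin s sp spk by (simp add: convolution_emeasure)
  also have "\<dots> = emeasure mu UNIV ^ k * emeasure mu UNIV"
    using Suc sp by simp
  finally show ?case using Suc fin s by (simp add: convolution_finite mult.commute)
qed

lemma conv_return0:
  fixes N :: "real measure"
  assumes fin: "finite_measure N" and s: "sets N = sets borel"
  shows "convolution (return borel 0) N = N"
proof (rule measure_eqI)
  show "sets (convolution (return borel 0) N) = sets N" using s by simp
  fix A assume "A \<in> sets (convolution (return borel 0) N)"
  then have A: "A \<in> sets borel" by simp
  have pr: "prob_space (return borel (0::real))" by (rule prob_space_return) simp
  have sp: "space N = UNIV" using sets_eq_imp_space_eq[OF s] by simp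
  interpret N: finite_measure N by fact
  have "emeasure (convolution (return borel 0) N) A
      = (\<integral>\<^sup>+x. \<integral>\<^sup>+y. indicator A (x + y) \<partial>N \<partial>return borel 0)"
    using A fin s sp pr by (subst convolution_emeasure') (auto simp: prob_space_def)
  also have "\<dots> = (\<integral>\<^sup>+y. indicator A (0 + y) \<partial>N)"
    using A s by (subst nn_integral_return) (auto intro!: N.borel_measurable_nn_integral simp: measurable_split_conv)
  finally show "emeasure (convolution (return borel 0) N) A = emeasure N A" using A s by simp
qed

lemma conv_pow_add:
  assumes fin: "finite_measure mu" and s: "sets mu = sets borel"
  shows "convolution (conv_pow mu l) (conv_pow mu k) = conv_pow mu (l + k)"
proof (induction l)
  case 0
  then show ?case using conv_pow_basic[OF fin s, of k] by (simp add: conv_return0)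
next
  case (Suc l)
  then show ?case
    using conv_pow_basic[OF fin s, of k] conv_pow_basic[OF fin s, of l] fin s
    by (simp add: convolution_associative[symmetric])
qed

lemma conv_distr_uminus:
  fixes M N :: "real measure"
  assumes fM: "finite_measure M" and sM: "sets M = sets borel"
    and fN: "finite_measure N" and sN: "sets N = sets borel"
  shows "convolution (distr M borel uminus) (distr N borel uminus) = distr (convolution M N) borel uminus"
proof (rule measure_eqI)
  interpret M: finite_measure M by fact
  interpret N: finite_measure N by fact
  have fM': "finite_measure (distr M borel uminus)" by (rule M.finite_measure_distr) (simp add: measurable_cong_sets[OF sM refl])
  have fN': "finite_measure (distr N borel uminus)" by (rule N.finite_measure_distr) (simp add: measurable_cong_sets[OF sN refl])
  show "sets (convolution (distr M borel uminus) (distr N borel uminus)) = sets (distr (convolution M N) borel uminus)"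
    by simp
  fix A assume "A \<in> sets (convolution (distr M borel uminus) (distr N borel uminus))"
  then have A[measurable]: "A \<in> sets borel" by simp
  have mN: "\<And>f::real\<Rightarrow>real\<Rightarrow>ennreal. case_prod f \<in> borel_measurable (borel \<Otimes>\<^sub>M borel) \<Longrightarrow> (\<lambda>x. \<integral>\<^sup>+y. f x y \<partial>N) \<in> borel_measurable borel"
  proof -
    fix f :: "real \<Rightarrow> real \<Rightarrow> ennreal" assume "case_prod f \<in> borel_measurable (borel \<Otimes>\<^sub>M borel)"
    moreover have se: "sets (borel \<Otimes>\<^sub>M N) = sets (borel \<Otimes>\<^sub>M borel)" by (rule sets_pair_measure_cong) (simp_all add: sN)
    ultimately show "(\<lambda>x. \<integral>\<^sup>+y. f x y \<partial>N) \<in> borel_measurable borel"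
      by (intro N.borel_measurable_nn_integral) (simp add: measurable_cong_sets[OF se refl])
  qed
  have "emeasure (convolution (distr M borel uminus) (distr N borel uminus)) A
      = (\<integral>\<^sup>+x. \<integral>\<^sup>+y. indicator A (x + y) \<partial>distr N borel uminus \<partial>distr M borel uminus)"
    using fM' fN' by (subst convolution_emeasure') auto
  also have "\<dots> = (\<integral>\<^sup>+x. \<integral>\<^sup>+y. indicator A (x + - y) \<partial>N \<partial>distr M borel uminus)"
  proof (rule nn_integral_cong)
    fix x
    show "(\<integral>\<^sup>+y. indicator A (x + y) \<partial>distr N borel uminus) = (\<integral>\<^sup>+y. indicator A (x + - y) \<partial>N)"
      by (subst nn_integral_distr) (auto simp: measurable_cong_sets[OF sN refl])
  qed
  also have "\<dots> = (\<integral>\<^sup>+x. \<integral>\<^sup>+y. indicator A (- x + - y) \<partial>N \<partial>M)"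
  proof -
    have F: "(\<lambda>x. \<integral>\<^sup>+y. indicator A (x - y) \<partial>N) \<in> borel_measurable borel"
      by (rule mN) measurable
    show ?thesis
      by (subst nn_integral_distr) (auto simp: measurable_cong_sets[OF sM refl] F)
  qed
  also have "\<dots> = emeasure (convolution M N) (uminus -` A \<inter> space (convolution M N))"
  proof -
    have "uminus -` A \<in> sets borel" using measurable_sets_borel[OF borel_measurable_uminus[OF measurable_ident_sets[OF refl]] A] by simp
    then show ?thesis using fM fN sM sN
      by (subst convolution_emeasure') (auto intro!: nn_integral_cong simp: indicator_def)
  qed
  also have "\<dots> = emeasure (distr (convolution M N) borel uminus) A"
    by (subst emeasure_distr) auto
  finally show "emeasure (convolution (distr M borel uminus) (distr N borel uminus)) A = emeasure (distr (convolution M N) borel uminus) A" .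
qed

lemma conv_pow_reflect:
  assumes fin: "finite_measure mu" and s: "sets mu = sets borel"
  shows "conv_pow (reflect_measure mu) k = distr (conv_pow mu k) borel uminus"
proof (induction k)
  case 0
  then show ?case by (simp add: distr_return)
next
  case (Suc k)
  have "conv_pow (reflect_measure mu) (Suc k) = convolution (reflect_measure mu) (distr (conv_pow mu k) borel uminus)"
    using Suc.IH by simp
  also have "\<dots> = distr (convolution mu (conv_pow mu k)) borel uminus"
    unfolding reflect_measure_def
    using conv_pow_basic[OF fin s, of k] by (intro conv_distr_uminus[OF fin s]) auto
  also have "\<dots> = distr (conv_pow mu (Suc k)) borel uminus" by simp
  finally show ?case .
qed

lemma nat_infsum_suminf:
  fixes f :: "nat \<Rightarrow> real"
  assumes "f summable_on UNIV"
  shows "infsum f UNIV = suminf f"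
  using sums_unique[OF has_sum_imp_sums[OF has_sum_infsum[OF assms]]] by simp

lemma binom_exp_zero:
  fixes D :: real
  shows "(\<Sum>k\<le>m. D^(m-k) / fact (m-k) * ((-D)^k / fact k)) = (if m = 0 then 1 else 0)"
proof -
  have "(\<Sum>k\<le>m. D^(m-k) / fact (m-k) * ((-D)^k / fact k))
      = (\<Sum>k\<le>m. of_nat (m choose k) * (-D)^k * D^(m-k)) / fact m"
    unfolding sum_divide_distrib
  proof (rule sum.cong[OF refl])
    fix k assume "k \<in> {..m}"
    then have km: "k \<le> m" by simp
    have "of_nat (m choose k) = (fact m / (fact k * fact (m - k)) :: real)"
      using binomial_fact[OF km] by simp
    then show "D^(m-k) / fact (m-k) * ((-D)^k / fact k) = of_nat (m choose k) * (-D)^k * D^(m-k) / fact m"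
      by (simp add: field_simps)
  qed
  also have "\<dots> = (-D + D)^m / fact m" by (simp only: binomial_ring)
  finally show ?thesis by simp
qed

lemma double_exp_sum:
  fixes a :: "nat \<Rightarrow> real" and D L B :: real
  assumes D: "D \<ge> 0" and L: "L \<ge> 0" and ab: "\<And>m. \<bar>a m\<bar> \<le> B * L^m"
  shows "(\<Sum>l. D^l / fact l * (\<Sum>k. (-D)^k / fact k * a (l+k))) = a 0"
proof -
  have B: "B \<ge> 0" using ab[of 0] by simp
  define u where "u n = (D*L)^n / fact n" for n
  have u0: "u n \<ge> 0" for n unfolding u_def using D L by simp
  have us: "summable u" unfolding u_def using summable_exp[of "D*L"] by (simp add: field_simps)
  have uso: "u summable_on UNIV" using summable_on_UNIV_nonneg_real_iff[of u] u0 us by simp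
  define F where "F l k = D^l / fact l * ((-D)^k / fact k * a (l+k))" for l k
  have Fb: "\<bar>F l k\<bar> \<le> B * (u l * u k)" for l k
  proof -
    have "\<bar>F l k\<bar> = D^l / fact l * (D^k / fact k * \<bar>a (l+k)\<bar>)"
      unfolding F_def using D by (simp add: abs_mult power_abs)
    also have "\<dots> \<le> D^l / fact l * (D^k / fact k * (B * L^(l+k)))"
      using D ab by (intro mult_left_mono) auto
    also have "\<dots> = B * (u l * u k)" unfolding u_def by (simp add: power_add power_mult_distrib field_simps)
    finally show ?thesis .
  qed
  define G where "G = (\<lambda>(l::nat,k::nat). B * (u l * u k))"
  have Gs: "(\<lambda>x. norm (G x)) summable_on UNIV \<times> UNIV"
  proof -
    have "(\<lambda>x. norm (G x)) summable_on Sigma UNIV (\<lambda>_. UNIV)"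
    proof (rule Infinite_Sum.abs_summable_on_Sigma_iff[THEN iffD2], intro conjI ballI)
      fix l :: nat
      show "(\<lambda>k. norm (G (l, k))) summable_on UNIV"
        unfolding G_def using uso u0 B
        by (simp add: abs_mult summable_on_cmult_right)
      have "(\<lambda>l. \<Sum>\<^sub>\<infinity>k. norm (G (l, k))) = (\<lambda>l. (B * u l) * infsum u UNIV)"
        unfolding G_def using u0 B by (auto simp: abs_mult infsum_cmult_right' mult.assoc)
      then show "(\<lambda>l. norm (\<Sum>\<^sub>\<infinity>k\<in>UNIV. norm (G (l, k)))) summable_on UNIV"
      proof -
        have nn: "infsum u UNIV \<ge> 0" using u0 by (simp add: infsum_nonneg)
        have "(\<lambda>l. B * u l * infsum u UNIV) summable_on UNIV"
          using uso by (intro summable_on_cmult_left summable_on_cmult_right)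
        moreover have "(\<lambda>l. norm (\<Sum>\<^sub>\<infinity>k\<in>UNIV. norm (G (l, k)))) = (\<lambda>l. B * u l * infsum u UNIV)"
          using \<open>(\<lambda>l. \<Sum>\<^sub>\<infinity>k. norm (G (l, k))) = _\<close> nn u0 B by (auto simp: fun_eq_iff)
        ultimately show ?thesis by simp
      qed
    qed
    then show ?thesis by simp
  qed
  have Fs: "(\<lambda>(l,k). F l k) summable_on UNIV \<times> UNIV"
  proof -
    have "(\<lambda>x. norm ((\<lambda>(l,k). F l k) x)) summable_on UNIV \<times> UNIV"
      by (rule Infinite_Sum.abs_summable_on_comparison_test[OF Gs]) (use Fb u0 B in \<open>auto simp: G_def\<close>)
    then show ?thesis using summable_on_iff_abs_summable_on_real by blast
  qed
  have Frow: "F l summable_on UNIV" for l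
  proof -
    have "(\<lambda>(l,k). F l k) summable_on Pair l ` UNIV"
      by (rule summable_on_subset_banach[OF Fs]) auto
    then have "((\<lambda>(l,k). F l k) \<circ> Pair l) summable_on UNIV"
      by (subst summable_on_reindex[symmetric]) (auto simp: inj_on_def)
    then show ?thesis by (simp add: o_def)
  qed
  have inner: "(\<Sum>k. (-D)^k / fact k * a (l+k)) * (D^l / fact l) = (\<Sum>k. F l k)" for l
  proof -
    have "summable (F l)" using summable_on_imp_summable[OF Frow] .
    show ?thesis
    proof (cases "D = 0")
      case True then show ?thesis by (cases "l = 0") (auto simp: F_def power_0_left)
    next
      case False
      have e: "(\<lambda>k. (-D)^k / fact k * a (l+k)) = (\<lambda>k. (fact l / D^l) * F l k)"
        using False by (auto simp: F_def fun_eq_iff)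
      have "summable (\<lambda>k. (-D)^k / fact k * a (l+k))" unfolding e
        by (rule summable_mult) fact
      then show ?thesis unfolding F_def by (subst suminf_mult2) (auto simp: mult.commute mult.left_commute)
    qed
  qed
  have "(\<Sum>l. D^l / fact l * (\<Sum>k. (-D)^k / fact k * a (l+k))) = (\<Sum>l. \<Sum>k. F l k)"
    using inner by (simp add: mult.commute)
  also have "\<dots> = infsum (\<lambda>l. infsum (F l) UNIV) UNIV"
  proof -
    have r: "infsum (F l) UNIV = (\<Sum>k. F l k)" for l using nat_infsum_suminf[OF Frow] .
    have "(\<lambda>l. infsum (F l) UNIV) summable_on UNIV"
      using summable_on_Sigma_banach[of F UNIV "\<lambda>_. UNIV"] Fs by simp
    then show ?thesis using nat_infsum_suminf r by simp
  qed
  also have "\<dots> = infsum (\<lambda>(l,k). F l k) (UNIV \<times> UNIV)"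
    using infsum_Sigma'_banach[of F UNIV "\<lambda>_. UNIV"] Fs by simp
  also have "\<dots> = infsum (\<lambda>(m,k). F (m-k) k) (Sigma UNIV (\<lambda>m. {..m}))"
  proof -
    have bij: "bij_betw (\<lambda>(m,k). (m-k,k)) (Sigma UNIV (\<lambda>m::nat. {..m})) (UNIV \<times> UNIV)"
      by (rule bij_betw_byWitness[where f'="\<lambda>(l,k). (l+k,k)"]) auto
    show ?thesis using infsum_reindex_bij_betw[OF bij, of "\<lambda>(l,k). F l k"]
      by (simp add: case_prod_beta')
  qed
  also have "\<dots> = infsum (\<lambda>m. infsum (\<lambda>k. F (m-k) k) {..m}) UNIV"
  proof -
    have bij: "bij_betw (\<lambda>(m,k). (m-k,k)) (Sigma UNIV (\<lambda>m::nat. {..m})) (UNIV \<times> UNIV)"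
      by (rule bij_betw_byWitness[where f'="\<lambda>(l,k). (l+k,k)"]) auto
    have "(\<lambda>x. (\<lambda>(l,k). F l k) ((\<lambda>(m,k). (m-k,k)) x)) summable_on (Sigma UNIV (\<lambda>m::nat. {..m}))"
      using summable_on_reindex_bij_betw[OF bij] Fs by blast
    then have "(\<lambda>(m,k). F (m-k) k) summable_on (Sigma UNIV (\<lambda>m::nat. {..m}))"
      by (simp add: case_prod_beta')
    then show ?thesis using infsum_Sigma'_banach[of "\<lambda>m k. F (m-k) k" UNIV "\<lambda>m. {..m}"] by simp
  qed
  also have "\<dots> = infsum (\<lambda>m::nat. if m = 0 then a 0 else 0) UNIV"
  proof -
    have e: "infsum (\<lambda>k. F (m-k) k) {..m} = (if m = 0 then a 0 else 0)" for m
    proof -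
      have "infsum (\<lambda>k. F (m-k) k) {..m} = (\<Sum>k\<le>m. D^(m-k) / fact (m-k) * ((-D)^k / fact k)) * a m"
        by (simp add: F_def sum_distrib_right mult.assoc)
      also have "\<dots> = (if m = 0 then a 0 else 0)" by (simp only: binom_exp_zero) simp
      finally show ?thesis .
    qed
    show ?thesis by (simp only: e)
  qed
  also have "\<dots> = infsum (\<lambda>m::nat. if m = 0 then a 0 else 0) {0}"
    by (rule infsum_cong_neutral) auto
  also have "\<dots> = a 0" by simp
  finally show ?thesis .
qed

lemma ennreal_suminf_swap:
  fixes f :: "nat \<Rightarrow> nat \<Rightarrow> ennreal"
  shows "(\<Sum>i. \<Sum>k. f i k) = (\<Sum>k. \<Sum>i. f i k)"
proof -
  have "(\<Sum>i. \<Sum>k. f i k) = (\<Sum>i. \<integral>\<^sup>+k. f i k \<partial>count_space UNIV)"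
    by (simp add: nn_integral_count_space_nat)
  also have "\<dots> = (\<integral>\<^sup>+k. (\<Sum>i. f i k) \<partial>count_space UNIV)"
    by (rule nn_integral_suminf[symmetric]) simp
  also have "\<dots> = (\<Sum>k. \<Sum>i. f i k)" by (simp add: nn_integral_count_space_nat)
  finally show ?thesis .
qed

lemma fin_integral_bound:
  fixes M :: "real measure" and f :: "real \<Rightarrow> real"
  assumes fin: "finite_measure M" and f: "f \<in> borel_measurable M" and B: "\<And>x. \<bar>f x\<bar> \<le> B"
  shows "integrable M f" and "\<bar>\<integral>x. f x \<partial>M\<bar> \<le> B * measure M (space M)"
proof -
  interpret finite_measure M by fact
  show i: "integrable M f" using B f by (intro integrable_const_bound[where B=B]) auto
  have "\<bar>\<integral>x. f x \<partial>M\<bar> \<le> (\<integral>x. B \<partial>M)"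
    using B i by (intro integral_abs_bound_integral) auto
  then show "\<bar>\<integral>x. f x \<partial>M\<bar> \<le> B * measure M (space M)" by (simp add: mult.commute)
qed

locale mixture =
  fixes Qs :: "nat \<Rightarrow> real measure" and c :: "nat \<Rightarrow> real" and t :: real
  assumes Qs_sets: "\<And>k. sets (Qs k) = sets borel" and c_nn: "\<And>k. c k \<ge> 0"
begin

definition "mu A = (\<Sum>k. ennreal (c k) * emeasure (Qs k) {y. t + y \<in> A})"
definition "P = measure_of UNIV (sets borel) mu"

lemma shift_sets: "A \<in> sets borel \<Longrightarrow> {y. t + y \<in> A} \<in> sets (Qs k)"
proof -
  assume A: "A \<in> sets borel"
  have "(\<lambda>y::real. t + y) \<in> borel_measurable borel" by simp
  from measurable_sets_borel[OF this A] show ?thesis by (simp add: Qs_sets vimage_def)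
qed

lemma P_sets[simp]: "sets P = sets borel"
  unfolding P_def by (simp add: sets_measure_of_conv) (metis sets.sigma_sets_eq space_borel)

lemma P_space[simp]: "space P = UNIV"
  using sets_eq_imp_space_eq[OF P_sets] by simp

lemma P_emeasure: "A \<in> sets borel \<Longrightarrow> emeasure P A = mu A"
  unfolding P_def
proof (rule emeasure_measure_of_sigma)
  show "sigma_algebra UNIV (sets borel)" by (metis sets.sigma_algebra_axioms space_borel)
  show "positive (sets borel) mu" unfolding positive_def mu_def by simp
  show "countably_additive (sets borel) mu"
    unfolding countably_additive_def
  proof (intro allI impI)
    fix A :: "nat \<Rightarrow> real set"
    assume A: "range A \<subseteq> sets borel" and dj: "disjoint_family A" and U: "\<Union> (range A) \<in> sets borel"
    have e: "emeasure (Qs k) {y. t + y \<in> \<Union> (range A)} = (\<Sum>i. emeasure (Qs k) {y. t + y \<in> A i})" for k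
    proof -
      have "{y. t + y \<in> \<Union> (range A)} = (\<Union>i. {y. t + y \<in> A i})" by auto
      moreover have "range (\<lambda>i. {y. t + y \<in> A i}) \<subseteq> sets (Qs k)" using A shift_sets by auto
      moreover have "disjoint_family (\<lambda>i. {y. t + y \<in> A i})" using dj by (auto simp: disjoint_family_on_def)
      ultimately show ?thesis by (simp add: suminf_emeasure)
    qed
    have "(\<Sum>i. mu (A i)) = (\<Sum>i. \<Sum>k. ennreal (c k) * emeasure (Qs k) {y. t + y \<in> A i})"
      by (simp add: mu_def)
    also have "\<dots> = (\<Sum>k. \<Sum>i. ennreal (c k) * emeasure (Qs k) {y. t + y \<in> A i})"
      by (rule ennreal_suminf_swap)
    also have "\<dots> = (\<Sum>k. ennreal (c k) * (\<Sum>i. emeasure (Qs k) {y. t + y \<in> A i}))"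
      by (simp only: ennreal_suminf_cmult)
    also have "\<dots> = mu (\<Union> (range A))" by (simp only: mu_def e)
    finally show "(\<Sum>i. mu (A i)) = mu (\<Union> (range A))" .
  qed
qed

lemma shift_meas:
  assumes "u \<in> borel_measurable P"
  shows "(\<lambda>y. u (t + y)) \<in> borel_measurable (Qs k)"
proof -
  have u: "u \<in> borel_measurable borel" using assms unfolding measurable_cong_sets[OF P_sets refl] .
  have "(\<lambda>y. t + y) \<in> measurable (Qs k) borel" by (simp add: measurable_cong_sets[OF Qs_sets refl])
  from measurable_compose[OF this u] show ?thesis by (simp add: o_def)
qed

lemma P_nn_integral:
  assumes F: "F \<in> borel_measurable borel"
  shows "(\<integral>\<^sup>+x. F x \<partial>P) = (\<Sum>k. ennreal (c k) * (\<integral>\<^sup>+y. F (t + y) \<partial>Qs k))"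
proof -
  have "F \<in> borel_measurable P" using F by (simp add: measurable_cong_sets[OF P_sets refl])
  then show ?thesis
  proof (induction rule: borel_measurable_induct)
    case (cong f g)
    then have "f = g" by auto
    then show ?case using cong by simp
  next
    case (set A)
    then have A: "A \<in> sets borel" by simp
    have "(\<integral>\<^sup>+y. indicator A (t + y) \<partial>Qs k) = emeasure (Qs k) {y. t + y \<in> A}" for k
    proof -
      have "(\<lambda>y. indicator A (t + y) :: ennreal) = indicator {y. t + y \<in> A}" by (auto simp: indicator_def)
      then show ?thesis using shift_sets[OF A] by simp
    qed
    then show ?case using A by (simp add: P_emeasure mu_def)
  next
    case (mult u c')
    have mu': "(\<lambda>y. u (t + y)) \<in> borel_measurable (Qs k)" for k
      using mult(2) by (rule shift_meas)
    have "(\<integral>\<^sup>+x. c' * u x \<partial>P) = c' * (\<integral>\<^sup>+x. u x \<partial>P)"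
      using mult by (simp add: nn_integral_cmult)
    also have "\<dots> = (\<Sum>k. c' * (ennreal (c k) * (\<integral>\<^sup>+y. u (t + y) \<partial>Qs k)))"
      using mult by simp
    also have "\<dots> = (\<Sum>k. ennreal (c k) * (\<integral>\<^sup>+y. c' * u (t + y) \<partial>Qs k))"
      using mu' by (simp add: nn_integral_cmult mult.left_commute)
    finally show ?case .
  next
    case (add u v)
    have mu': "(\<lambda>y. u (t + y)) \<in> borel_measurable (Qs k)" "(\<lambda>y. v (t + y)) \<in> borel_measurable (Qs k)" for k
      using add by (simp_all add: shift_meas)
    have "(\<integral>\<^sup>+x. v x + u x \<partial>P) = (\<integral>\<^sup>+x. v x \<partial>P) + (\<integral>\<^sup>+x. u x \<partial>P)"
      using add by (simp add: nn_integral_add)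
    also have "\<dots> = (\<Sum>k. ennreal (c k) * (\<integral>\<^sup>+y. v (t + y) \<partial>Qs k)) + (\<Sum>k. ennreal (c k) * (\<integral>\<^sup>+y. u (t + y) \<partial>Qs k))"
      using add by simp
    also have "\<dots> = (\<Sum>k. ennreal (c k) * (\<integral>\<^sup>+y. v (t + y) \<partial>Qs k) + ennreal (c k) * (\<integral>\<^sup>+y. u (t + y) \<partial>Qs k))"
      by (rule suminf_add) auto
    also have "\<dots> = (\<Sum>k. ennreal (c k) * (\<integral>\<^sup>+y. v (t + y) + u (t + y) \<partial>Qs k))"
      using mu' by (simp add: nn_integral_add distrib_left)
    finally show ?case .
  next
    case (seq U)
    have mU: "(\<lambda>y. U i (t + y)) \<in> borel_measurable (Qs k)" for i k
      using seq by (simp add: shift_meas)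
    have incU: "incseq (\<lambda>i y. U i (t + y))" using \<open>incseq U\<close> by (auto simp: incseq_def le_fun_def)
    have "(\<integral>\<^sup>+x. (SUP i. U i) x \<partial>P) = (\<integral>\<^sup>+x. (SUP i. U i x) \<partial>P)" by (simp only: SUP_apply)
    also have "\<dots> = (SUP i. (\<integral>\<^sup>+x. U i x \<partial>P))"
      by (rule nn_integral_monotone_convergence_SUP[OF \<open>incseq U\<close>]) (use seq in blast)
    also have "\<dots> = (SUP i. \<Sum>k. ennreal (c k) * (\<integral>\<^sup>+y. U i (t + y) \<partial>Qs k))"
      by (rule SUP_cong[OF refl]) (rule seq.IH)
    also have "\<dots> = (\<Sum>k. SUP i. ennreal (c k) * (\<integral>\<^sup>+y. U i (t + y) \<partial>Qs k))"
    proof (rule ennreal_suminf_SUP_eq[symmetric])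
      fix k
      show "incseq (\<lambda>i. ennreal (c k) * (\<integral>\<^sup>+y. U i (t + y) \<partial>Qs k))"
        unfolding incseq_def
      proof (intro allI impI)
        fix i j :: nat assume "i \<le> j"
        then have "\<And>y. U i (t + y) \<le> U j (t + y)" using incU unfolding incseq_def le_fun_def by blast
        then show "ennreal (c k) * (\<integral>\<^sup>+y. U i (t + y) \<partial>Qs k) \<le> ennreal (c k) * (\<integral>\<^sup>+y. U j (t + y) \<partial>Qs k)"
          by (intro mult_left_mono nn_integral_mono) auto
      qed
    qed
    also have "\<dots> = (\<Sum>k. ennreal (c k) * (SUP i. (\<integral>\<^sup>+y. U i (t + y) \<partial>Qs k)))"
      by (simp only: SUP_mult_left_ennreal)
    also have "\<dots> = (\<Sum>k. ennreal (c k) * (\<integral>\<^sup>+y. (SUP i. U i (t + y)) \<partial>Qs k))"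
      by (simp only: nn_integral_monotone_convergence_SUP[OF incU mU])
    also have "\<dots> = (\<Sum>k. ennreal (c k) * (\<integral>\<^sup>+y. (SUP i. U i) (t + y) \<partial>Qs k))"
      by (simp only: SUP_apply)
    finally show ?case .
  qed
qed


context
  assumes Qs_fin: "\<And>k. finite_measure (Qs k)"
    and c_sum: "summable (\<lambda>k. c k * measure (Qs k) UNIV)"
begin

lemma Qs_space: "space (Qs k) = UNIV"
  using sets_eq_imp_space_eq[OF Qs_sets[of k]] by simp

lemma P_UNIV: "emeasure P UNIV = ennreal (\<Sum>k. c k * measure (Qs k) UNIV)"
proof -
  have "emeasure P UNIV = (\<Sum>k. ennreal (c k) * emeasure (Qs k) UNIV)"
    by (simp add: P_emeasure mu_def)
  also have "\<dots> = (\<Sum>k. ennreal (c k * measure (Qs k) UNIV))"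
    using finite_measure.emeasure_eq_measure[OF Qs_fin] Qs_space c_nn
    by (simp add: ennreal_mult)
  also have "\<dots> = ennreal (\<Sum>k. c k * measure (Qs k) UNIV)"
    using c_sum c_nn by (intro suminf_ennreal2) auto
  finally show ?thesis .
qed

lemma P_finite: "finite_measure P"
  by (rule finite_measureI) (simp add: P_UNIV)

lemma Qs_int_bound:
  assumes F: "F \<in> borel_measurable borel" and B: "\<And>x. \<bar>F x\<bar> \<le> B"
  shows "integrable (Qs k) (\<lambda>y. F (t + y))" and "\<bar>\<integral>y. F (t + y) \<partial>Qs k\<bar> \<le> B * measure (Qs k) UNIV"
proof -
  have m: "(\<lambda>y. F (t + y)) \<in> borel_measurable (Qs k)"
    using F by (simp add: measurable_cong_sets[OF Qs_sets refl])
  show "integrable (Qs k) (\<lambda>y. F (t + y))" by (rule fin_integral_bound(1)[OF Qs_fin m B])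
  show "\<bar>\<integral>y. F (t + y) \<partial>Qs k\<bar> \<le> B * measure (Qs k) UNIV"
    using fin_integral_bound(2)[OF Qs_fin m B] Qs_space by simp
qed

lemma P_integral_nn:
  assumes F: "F \<in> borel_measurable borel" and B: "\<And>x. \<bar>F x\<bar> \<le> B" and nn: "\<And>x. F x \<ge> 0"
  shows "summable (\<lambda>k. c k * (\<integral>y. F (t + y) \<partial>Qs k))"
    and "(\<integral>x. F x \<partial>P) = (\<Sum>k. c k * (\<integral>y. F (t + y) \<partial>Qs k))"
proof -
  have B0: "B \<ge> 0" using B[of 0] by simp
  have FP: "F \<in> borel_measurable P" using F by (simp add: measurable_cong_sets[OF P_sets refl])
  have iP: "integrable P F" using fin_integral_bound(1)[OF P_finite FP B] .
  have inn: "0 \<le> (\<integral>y. F (t + y) \<partial>Qs k)" for k using nn by simp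
  show sm: "summable (\<lambda>k. c k * (\<integral>y. F (t + y) \<partial>Qs k))"
  proof (rule summable_comparison_test[where g="\<lambda>k. B * (c k * measure (Qs k) UNIV)"])
    show "\<exists>N. \<forall>n\<ge>N. norm (c n * (\<integral>y. F (t + y) \<partial>Qs n)) \<le> B * (c n * measure (Qs n) UNIV)"
    proof (intro exI allI impI)
      fix n
      have "norm (c n * (\<integral>y. F (t + y) \<partial>Qs n)) = c n * \<bar>\<integral>y. F (t + y) \<partial>Qs n\<bar>"
        using c_nn[of n] by (simp add: abs_mult)
      also have "\<dots> \<le> c n * (B * measure (Qs n) UNIV)"
        using Qs_int_bound(2)[OF F B, of n] c_nn[of n] by (intro mult_left_mono) auto
      finally show "norm (c n * (\<integral>y. F (t + y) \<partial>Qs n)) \<le> B * (c n * measure (Qs n) UNIV)" by (simp add: mult.left_commute)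
    qed
    show "summable (\<lambda>k. B * (c k * measure (Qs k) UNIV))" using c_sum by (rule summable_mult)
  qed
  have "ennreal (\<integral>x. F x \<partial>P) = (\<integral>\<^sup>+x. ennreal (F x) \<partial>P)"
    by (rule nn_integral_eq_integral[symmetric]) (use iP nn in auto)
  also have "\<dots> = (\<Sum>k. ennreal (c k) * (\<integral>\<^sup>+y. ennreal (F (t + y)) \<partial>Qs k))"
    using F by (intro P_nn_integral) simp
  also have "\<dots> = (\<Sum>k. ennreal (c k * (\<integral>y. F (t + y) \<partial>Qs k)))"
  proof -
    have nnk: "(\<integral>\<^sup>+y. ennreal (F (t + y)) \<partial>Qs k) = ennreal (\<integral>y. F (t + y) \<partial>Qs k)" for k
      by (rule nn_integral_eq_integral[OF Qs_int_bound(1)[OF F B]]) (use nn in auto)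
    show ?thesis by (simp only: nnk ennreal_mult[OF c_nn inn])
  qed
  also have "\<dots> = ennreal (\<Sum>k. c k * (\<integral>y. F (t + y) \<partial>Qs k))"
    using sm c_nn inn by (intro suminf_ennreal2) auto
  finally have e: "ennreal (\<integral>x. F x \<partial>P) = ennreal (\<Sum>k. c k * (\<integral>y. F (t + y) \<partial>Qs k))" .
  have "0 \<le> (\<Sum>k. c k * (\<integral>y. F (t + y) \<partial>Qs k))" using sm c_nn inn by (intro suminf_nonneg) auto
  moreover have "0 \<le> (\<integral>x. F x \<partial>P)" using nn by simp
  ultimately show "(\<integral>x. F x \<partial>P) = (\<Sum>k. c k * (\<integral>y. F (t + y) \<partial>Qs k))" using e by simp
qed

lemma P_integral:
  assumes F: "F \<in> borel_measurable borel" and B: "\<And>x. \<bar>F x\<bar> \<le> B"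
  shows "summable (\<lambda>k. c k * (\<integral>y. F (t + y) \<partial>Qs k))"
    and "(\<integral>x. F x \<partial>P) = (\<Sum>k. c k * (\<integral>y. F (t + y) \<partial>Qs k))"
proof -
  define Fp where "Fp x = max (F x) 0" for x
  define Fn where "Fn x = max (- F x) 0" for x
  have Fpm: "Fp \<in> borel_measurable borel" and Fnm: "Fn \<in> borel_measurable borel"
    unfolding Fp_def Fn_def using F by auto
  have Fpb: "\<bar>Fp x\<bar> \<le> B" and Fnb: "\<bar>Fn x\<bar> \<le> B" for x
    unfolding Fp_def Fn_def using B[of x] by (simp_all add: max_def abs_le_iff)
  have Fpn: "Fp x \<ge> 0" and Fnn: "Fn x \<ge> 0" for x unfolding Fp_def Fn_def by simp_all
  have Fe: "F x = Fp x - Fn x" for x unfolding Fp_def Fn_def by (simp add: max_def)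
  note p = P_integral_nn[OF Fpm Fpb Fpn] and n = P_integral_nn[OF Fnm Fnb Fnn]
  have "Fp \<in> borel_measurable P" using Fpm unfolding measurable_cong_sets[OF P_sets refl] .
  then have FpP: "integrable P Fp" by (rule fin_integral_bound(1)[where f=Fp and B=B, OF P_finite _ Fpb])
  have "Fn \<in> borel_measurable P" using Fnm unfolding measurable_cong_sets[OF P_sets refl] .
  then have FnP: "integrable P Fn" by (rule fin_integral_bound(1)[where f=Fn and B=B, OF P_finite _ Fnb])
  have ek: "c k * (\<integral>y. F (t + y) \<partial>Qs k) = c k * (\<integral>y. Fp (t + y) \<partial>Qs k) - c k * (\<integral>y. Fn (t + y) \<partial>Qs k)" for k
  proof -
    have "(\<integral>y. Fp (t + y) \<partial>Qs k) - (\<integral>y. Fn (t + y) \<partial>Qs k) = (\<integral>y. Fp (t + y) - Fn (t + y) \<partial>Qs k)"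
      by (rule Bochner_Integration.integral_diff[symmetric]) (rule Qs_int_bound(1)[OF Fpm Fpb], rule Qs_int_bound(1)[OF Fnm Fnb])
    also have "\<dots> = (\<integral>y. F (t + y) \<partial>Qs k)" by (simp only: Fe[symmetric])
    finally show ?thesis by (simp only: right_diff_distrib[symmetric])
  qed
  show "summable (\<lambda>k. c k * (\<integral>y. F (t + y) \<partial>Qs k))"
    unfolding ek using p(1) n(1) by (rule summable_diff)
  have "(\<integral>x. F x \<partial>P) = (\<integral>x. Fp x \<partial>P) - (\<integral>x. Fn x \<partial>P)"
    using Bochner_Integration.integral_diff[OF FpP FnP] by (simp only: Fe[symmetric])
  also have "\<dots> = (\<Sum>k. c k * (\<integral>y. Fp (t + y) \<partial>Qs k)) - (\<Sum>k. c k * (\<integral>y. Fn (t + y) \<partial>Qs k))"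
    using p(2) n(2) by simp
  also have "\<dots> = (\<Sum>k. c k * (\<integral>y. F (t + y) \<partial>Qs k))"
    unfolding ek using p(1) n(1) by (rule suminf_diff)
  finally show "(\<integral>x. F x \<partial>P) = (\<Sum>k. c k * (\<integral>y. F (t + y) \<partial>Qs k))" .
qed

end

end

lemma integral_convolution:
  fixes M N :: "real measure" and f :: "real \<Rightarrow> real"
  assumes fM: "finite_measure M" and sM: "sets M = sets borel"
    and fN: "finite_measure N" and sN: "sets N = sets borel"
    and f: "f \<in> borel_measurable borel" and B: "\<And>x. \<bar>f x\<bar> \<le> B"
  shows "(\<integral>x. f x \<partial>convolution M N) = (\<integral>x. \<integral>y. f (x + y) \<partial>N \<partial>M)"
proof -
  interpret M: finite_measure M by fact
  interpret N: finite_measure N by fact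
  interpret pair_sigma_finite M N ..
  have fin: "finite_measure (M \<Otimes>\<^sub>M N)" by (rule finite_measure_pair_measure[OF fN fM])
  have sp: "sets (M \<Otimes>\<^sub>M N) = sets (borel \<Otimes>\<^sub>M borel)" by (rule sets_pair_measure_cong) (simp_all add: sM sN)
  have pm: "(\<lambda>(x, y). x + y) \<in> measurable (M \<Otimes>\<^sub>M N) borel"
    unfolding measurable_cong_sets[OF sp refl] by simp
  have fm: "(\<lambda>z. f (case z of (x, y) \<Rightarrow> x + y)) \<in> borel_measurable (M \<Otimes>\<^sub>M N)"
    using measurable_compose[OF pm f] by (simp add: o_def)
  have int: "integrable (M \<Otimes>\<^sub>M N) (\<lambda>z. f (case z of (x, y) \<Rightarrow> x + y))"
    using B fm by (intro finite_measure.integrable_const_bound[OF fin, where B=B]) auto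
  have "(\<integral>x. f x \<partial>convolution M N) = (\<integral>z. f (case z of (x, y) \<Rightarrow> x + y) \<partial>(M \<Otimes>\<^sub>M N))"
    unfolding convolution_def by (rule integral_distr[OF pm f])
  also have "\<dots> = (\<integral>x. \<integral>y. f (x + y) \<partial>N \<partial>M)"
    using integral_fst'[OF int] by simp
  finally show ?thesis .
qed

locale cpp =
  fixes Delta gamma lam :: real and nu :: "real measure"
  assumes Delta: "Delta > 0" and lam: "lam > 0" and nu_fin: "finite_measure nu"
    and nu_sets: "sets nu = sets borel" and nu_mass: "measure nu UNIV = lam"
begin

abbreviation "Q k \<equiv> conv_pow nu k"
abbreviation "R k \<equiv> conv_pow (reflect_measure nu) k"
definition "w k = exp (- lam * Delta) * Delta ^ k / fact k"

lemma Q_sets: "sets (Q k) = sets borel" using conv_pow_basic[OF nu_fin nu_sets] by blast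
lemma Q_fin: "finite_measure (Q k)" using conv_pow_basic[OF nu_fin nu_sets] by blast
lemma Q_space: "space (Q k) = UNIV" using sets_eq_imp_space_eq[OF Q_sets[of k]] by simp

lemma nu_UNIV: "emeasure nu UNIV = ennreal lam"
  using finite_measure.emeasure_eq_measure[OF nu_fin, of UNIV] nu_mass sets_eq_imp_space_eq[OF nu_sets] by simp

lemma Q_mass: "measure (Q k) UNIV = lam ^ k"
proof -
  have "emeasure (Q k) UNIV = ennreal (lam ^ k)"
    using conv_pow_basic[OF nu_fin nu_sets, of k] nu_UNIV lam by (simp add: ennreal_power)
  then show ?thesis using lam by (simp add: measure_def)
qed

lemma R_eq: "R k = distr (Q k) borel uminus"
  by (rule conv_pow_reflect[OF nu_fin nu_sets])

lemma exp_summable: "summable (\<lambda>k. x ^ k / fact k :: real)"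
  using summable_exp[of x] by (simp add: field_simps)

lemma w_sum: "summable (\<lambda>k. w k * measure (Q k) UNIV)"
proof -
  have "summable (\<lambda>k. exp (- lam * Delta) * ((Delta * lam) ^ k / fact k))"
    by (intro summable_mult exp_summable)
  then show ?thesis by (simp add: w_def Q_mass power_mult_distrib field_simps)
qed

lemma w_nn: "w k \<ge> 0" using Delta by (simp add: w_def)

sublocale mix: mixture Q w "gamma * Delta"
  by unfold_locales (simp_all add: Q_sets w_nn)

lemma lawP_eq: "lawP Delta gamma lam nu = mix.P"
  unfolding lawP_def mix.P_def mix.mu_def[abs_def] w_def ..

lemma lawP_finite: "finite_measure (lawP Delta gamma lam nu)"
  unfolding lawP_eq by (rule mix.P_finite[OF Q_fin w_sum])

lemma lawP_sets[simp]: "sets (lawP Delta gamma lam nu) = sets borel"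
  unfolding lawP_eq by simp

lemma lawP_integral:
  assumes F: "F \<in> borel_measurable borel" and B: "\<And>x. \<bar>F x\<bar> \<le> B"
  shows "(\<integral>x. F x \<partial>lawP Delta gamma lam nu) = (\<Sum>k. w k * (\<integral>y. F (gamma * Delta + y) \<partial>Q k))"
  unfolding lawP_eq by (rule mix.P_integral(2)[OF Q_fin w_sum F B])

lemma lawP_emeasure:
  assumes "A \<in> sets borel"
  shows "emeasure (lawP Delta gamma lam nu) A = (\<Sum>k. ennreal (w k) * emeasure (Q k) {y. gamma * Delta + y \<in> A})"
  unfolding lawP_eq using assms by (simp add: mix.P_emeasure mix.mu_def)


lemma R_sets: "sets (R k) = sets borel" by (simp add: R_eq)
lemma R_fin: "finite_measure (R k)"
  unfolding R_eq by (rule finite_measure.finite_measure_distr[OF Q_fin]) (simp add: measurable_cong_sets[OF Q_sets refl])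

definition "Ik (f :: real \<Rightarrow> real) x k = (\<integral>y. f (x - gamma * Delta - y) \<partial>R k)"

lemma convM_eq: "convM Delta gamma lam nu f x = exp (lam * Delta) * (\<Sum>k. (-Delta)^k / fact k * Ik f x k)"
  by (simp add: convM_def Ik_def)

lemma Ik_eq:
  assumes f: "f \<in> borel_measurable borel"
  shows "Ik f x k = (\<integral>y. f (x - gamma * Delta + y) \<partial>Q k)"
proof -
  have um: "(uminus :: real \<Rightarrow> real) \<in> measurable (Q k) borel" by (simp add: measurable_cong_sets[OF Q_sets refl])
  have fm: "(\<lambda>y. f (x - gamma * Delta - y)) \<in> borel_measurable borel" using f by simp
  show ?thesis unfolding Ik_def R_eq integral_distr[OF um fm] by simp
qed

lemma Qshift_meas:
  assumes f: "f \<in> borel_measurable borel"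
  shows "(\<lambda>y. f (a + y)) \<in> borel_measurable (Q k)"
  using f by (simp add: measurable_cong_sets[OF Q_sets refl])

lemma Q_int_bound:
  assumes f: "f \<in> borel_measurable borel" and B: "\<And>x. \<bar>f x\<bar> \<le> B"
  shows "integrable (Q k) (\<lambda>y. f (a + y))" and "\<bar>\<integral>y. f (a + y) \<partial>Q k\<bar> \<le> B * lam ^ k"
proof -
  have B': "\<bar>f (a + y)\<bar> \<le> B" for y using B .
  show "integrable (Q k) (\<lambda>y. f (a + y))"
    by (rule fin_integral_bound(1)[OF Q_fin Qshift_meas[OF f]]) (rule B')
  show "\<bar>\<integral>y. f (a + y) \<partial>Q k\<bar> \<le> B * lam ^ k"
    using fin_integral_bound(2)[OF Q_fin Qshift_meas[OF f, of a] B'] by (simp add: Q_space Q_mass)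
qed

lemma Ik_bound:
  assumes f: "f \<in> borel_measurable borel" and B: "\<And>x. \<bar>f x\<bar> \<le> B"
  shows "\<bar>Ik f x k\<bar> \<le> B * lam ^ k"
  unfolding Ik_eq[OF f] using Q_int_bound(2)[OF f B, where a="x - gamma * Delta"] by simp

lemma Ik_meas:
  assumes f: "f \<in> borel_measurable borel"
  shows "(\<lambda>x. Ik f x k) \<in> borel_measurable borel"
proof -
  interpret Qk: finite_measure "Q k" by (rule Q_fin)
  have se: "sets (borel \<Otimes>\<^sub>M Q k) = sets (borel \<Otimes>\<^sub>M borel)" by (rule sets_pair_measure_cong) (simp_all add: Q_sets)
  have h: "(\<lambda>(x, y). f (x - gamma * Delta + y)) \<in> borel_measurable (borel \<Otimes>\<^sub>M Q k)"
    unfolding measurable_cong_sets[OF se refl] using f by measurable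
  have "(\<lambda>x. \<integral>y. f (x - gamma * Delta + y) \<partial>Q k) \<in> borel_measurable borel"
    using Qk.borel_measurable_lebesgue_integral[OF h] by simp
  then show ?thesis unfolding Ik_eq[OF f] .
qed

lemma bsum: "summable (\<lambda>k. Delta^k / fact k * (B * lam^k))"
proof -
  have "summable (\<lambda>k. B * ((Delta * lam) ^ k / fact k))" by (intro summable_mult exp_summable)
  then show ?thesis by (simp add: power_mult_distrib field_simps)
qed

lemma term_bound:
  assumes f: "f \<in> borel_measurable borel" and B: "\<And>x. \<bar>f x\<bar> \<le> B"
  shows "norm ((-Delta)^k / fact k * Ik f x k) \<le> Delta^k / fact k * (B * lam^k)"
proof -
  have "norm ((-Delta)^k / fact k * Ik f x k) = Delta^k / fact k * \<bar>Ik f x k\<bar>"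
    using Delta by (simp add: abs_mult power_abs)
  also have "\<dots> \<le> Delta^k / fact k * (B * lam^k)"
    using Ik_bound[OF f B] Delta by (intro mult_left_mono) auto
  finally show ?thesis .
qed

lemma convM_summable:
  assumes f: "f \<in> borel_measurable borel" and B: "\<And>x. \<bar>f x\<bar> \<le> B"
  shows "summable (\<lambda>k. (-Delta)^k / fact k * Ik f x k)"
  by (rule summable_comparison_test[OF _ bsum]) (use term_bound[OF f B] in blast)

definition "CB B = exp (lam * Delta) * (\<Sum>k. Delta^k / fact k * (B * lam^k))"

lemma convM_bound:
  assumes f: "f \<in> borel_measurable borel" and B: "\<And>x. \<bar>f x\<bar> \<le> B"
  shows "\<bar>convM Delta gamma lam nu f x\<bar> \<le> CB B"
proof -
  have "norm (\<Sum>k. (-Delta)^k / fact k * Ik f x k) \<le> (\<Sum>k. Delta^k / fact k * (B * lam^k))"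
    by (rule norm_suminf_le[OF term_bound[OF f B] bsum])
  then show ?thesis unfolding convM_eq CB_def by (simp add: abs_mult)
qed

lemma convM_meas:
  assumes f: "f \<in> borel_measurable borel" and B: "\<And>x. \<bar>f x\<bar> \<le> B"
  shows "convM Delta gamma lam nu f \<in> borel_measurable borel"
proof (rule borel_measurable_LIMSEQ_real)
  fix x
  show "(\<lambda>n. exp (lam * Delta) * (\<Sum>k<n. (-Delta)^k / fact k * Ik f x k)) \<longlonglongrightarrow> convM Delta gamma lam nu f x"
    unfolding convM_eq by (intro tendsto_mult_left summable_LIMSEQ convM_summable[OF f B])
next
  fix n
  show "(\<lambda>x. exp (lam * Delta) * (\<Sum>k<n. (-Delta)^k / fact k * Ik f x k)) \<in> borel_measurable borel"
    using Ik_meas[OF f] by measurable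
qed

lemma Rshift_meas:
  assumes f: "f \<in> borel_measurable borel"
  shows "(\<lambda>y. f (a - y)) \<in> borel_measurable (R k)"
  using f by (simp add: measurable_cong_sets[OF R_sets refl])

lemma Ik_tendsto:
  assumes fn_m: "\<And>n. fn n \<in> borel_measurable borel" and fn_b: "\<And>n x. \<bar>fn n x\<bar> \<le> B"
    and f_m: "f \<in> borel_measurable borel"
    and lim: "\<And>y. (\<lambda>n. fn n y) \<longlonglongrightarrow> f y"
  shows "(\<lambda>n. Ik (fn n) x k) \<longlonglongrightarrow> Ik f x k"
  unfolding Ik_def
proof (rule integral_dominated_convergence[where w="\<lambda>_. B"])
  show "(\<lambda>y. f (x - gamma * Delta - y)) \<in> borel_measurable (R k)" by (rule Rshift_meas[OF f_m])
  show "(\<lambda>y. fn n (x - gamma * Delta - y)) \<in> borel_measurable (R k)" for n by (rule Rshift_meas[OF fn_m])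
  show "integrable (R k) (\<lambda>_. B)" using finite_measure.integrable_const[OF R_fin] .
  show "AE y in R k. (\<lambda>n. fn n (x - gamma * Delta - y)) \<longlonglongrightarrow> f (x - gamma * Delta - y)"
    using lim by simp
  show "AE y in R k. norm (fn n (x - gamma * Delta - y)) \<le> B" for n using fn_b by simp
qed

lemma convM_tendsto:
  assumes fn_m: "\<And>n. fn n \<in> borel_measurable borel" and fn_b: "\<And>n x. \<bar>fn n x\<bar> \<le> B"
    and f_m: "f \<in> borel_measurable borel"
    and lim: "\<And>y. (\<lambda>n. fn n y) \<longlonglongrightarrow> f y"
  shows "(\<lambda>n. convM Delta gamma lam nu (fn n) x) \<longlonglongrightarrow> convM Delta gamma lam nu f x"
proof -
  have "(\<lambda>n. \<Sum>k. (-Delta)^k / fact k * Ik (fn n) x k) \<longlonglongrightarrow> (\<Sum>k. (-Delta)^k / fact k * Ik f x k)"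
  proof (rule tannerys_theorem[where M="\<lambda>k. Delta^k / fact k * (B * lam^k)", THEN conjunct2, THEN conjunct2])
    show "(\<lambda>n. (-Delta)^k / fact k * Ik (fn n) x k) \<longlonglongrightarrow> (-Delta)^k / fact k * Ik f x k" for k
      by (intro tendsto_mult_left Ik_tendsto[OF fn_m fn_b f_m lim])
    show "\<forall>\<^sub>F (k, n) in at_top \<times>\<^sub>F sequentially. norm ((-Delta)^k / fact k * Ik (fn n) x k) \<le> Delta^k / fact k * (B * lam^k)"
      by (intro always_eventually) (simp only: case_prod_beta term_bound[OF fn_m fn_b] simp_thms)
    show "summable (\<lambda>k. Delta^k / fact k * (B * lam^k))" by (rule bsum)
  qed simp
  then show ?thesis unfolding convM_eq by (rule tendsto_mult_left)
qed

lemma Q_conv: "convolution (Q l) (Q k) = Q (l + k)"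
  by (rule conv_pow_add[OF nu_fin nu_sets])

lemma int_Ik_Q:
  assumes f: "f \<in> borel_measurable borel" and B: "\<And>x. \<bar>f x\<bar> \<le> B"
  shows "(\<integral>z. Ik f (gamma * Delta + z) k \<partial>Q l) = (\<integral>y. f y \<partial>Q (l + k))"
proof -
  have "(\<integral>z. Ik f (gamma * Delta + z) k \<partial>Q l) = (\<integral>z. \<integral>y. f (z + y) \<partial>Q k \<partial>Q l)"
    by (simp add: Ik_eq[OF f])
  also have "\<dots> = (\<integral>y. f y \<partial>convolution (Q l) (Q k))"
    by (rule integral_convolution[symmetric, OF Q_fin Q_sets Q_fin Q_sets f B])
  also have "\<dots> = (\<integral>y. f y \<partial>Q (l + k))" by (simp only: Q_conv)
  finally show ?thesis .
qed

lemma int_convM_Q: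
  assumes f: "f \<in> borel_measurable borel" and B: "\<And>x. \<bar>f x\<bar> \<le> B"
  shows "(\<integral>z. convM Delta gamma lam nu f (gamma * Delta + z) \<partial>Q l)
       = exp (lam * Delta) * (\<Sum>k. (-Delta)^k / fact k * (\<integral>y. f y \<partial>Q (l + k)))"
proof -
  define g where "g k z = (-Delta)^k / fact k * Ik f (gamma * Delta + z) k" for k z
  have gm: "g k \<in> borel_measurable (Q l)" for k
  proof -
    have "(\<lambda>z. Ik f (gamma * Delta + z) k) \<in> borel_measurable borel"
      using measurable_compose[OF _ Ik_meas[OF f], of "\<lambda>z. gamma * Delta + z" borel] by (simp add: o_def)
    then show ?thesis unfolding g_def by (simp add: measurable_cong_sets[OF Q_sets refl])
  qed
  have gb: "norm (g k z) \<le> Delta^k / fact k * (B * lam^k)" for k z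
    unfolding g_def by (rule term_bound[OF f B])
  have gi: "integrable (Q l) (g k)" for k
    by (rule fin_integral_bound(1)[OF Q_fin gm]) (use gb in simp)
  have s: "(\<lambda>k. integral\<^sup>L (Q l) (g k)) sums (\<integral>z. (\<Sum>k. g k z) \<partial>Q l)"
  proof (rule sums_integral[OF gi])
    show "AE z in Q l. summable (\<lambda>k. norm (g k z))"
      by (intro AE_I2 summable_comparison_test[OF _ bsum]) (use gb in auto)
    show "summable (\<lambda>k. \<integral>z. norm (g k z) \<partial>Q l)"
    proof (rule summable_comparison_test[OF _ bsum[where B="B * lam ^ l"]])
      show "\<exists>N. \<forall>n\<ge>N. norm (\<integral>z. norm (g n z) \<partial>Q l) \<le> Delta ^ n / fact n * (B * lam ^ l * lam ^ n)"
      proof (intro exI allI impI)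
        fix n
        have "\<bar>\<integral>z. norm (g n z) \<partial>Q l\<bar> \<le> Delta ^ n / fact n * (B * lam ^ n) * measure (Q l) (space (Q l))"
          by (rule fin_integral_bound(2)[OF Q_fin]) (use gm gb in auto)
        then show "norm (\<integral>z. norm (g n z) \<partial>Q l) \<le> Delta ^ n / fact n * (B * lam ^ l * lam ^ n)"
          by (simp add: Q_space Q_mass mult_ac)
      qed
    qed
  qed
  have "(\<integral>z. convM Delta gamma lam nu f (gamma * Delta + z) \<partial>Q l) = (\<integral>z. exp (lam * Delta) * (\<Sum>k. g k z) \<partial>Q l)"
    by (simp add: convM_eq g_def)
  also have "\<dots> = exp (lam * Delta) * (\<integral>z. (\<Sum>k. g k z) \<partial>Q l)" by simp
  also have "\<dots> = exp (lam * Delta) * (\<Sum>k. integral\<^sup>L (Q l) (g k))" using s by (simp add: sums_iff)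
  also have "\<dots> = exp (lam * Delta) * (\<Sum>k. (-Delta)^k / fact k * (\<integral>y. f y \<partial>Q (l + k)))"
    unfolding g_def by (simp add: int_Ik_Q[OF f B])
  finally show ?thesis .
qed

lemma int_convM:
  assumes f: "f \<in> borel_measurable borel" and B: "\<And>x. \<bar>f x\<bar> \<le> B"
  shows "(\<integral>x. convM Delta gamma lam nu f x \<partial>lawP Delta gamma lam nu) = f 0"
proof -
  define a where "a m = (\<integral>y. f y \<partial>Q m)" for m
  have ab: "\<bar>a m\<bar> \<le> B * lam ^ m" for m
    unfolding a_def using Q_int_bound(2)[OF f B, where a=0 and k=m] by simp
  have "(\<integral>x. convM Delta gamma lam nu f x \<partial>lawP Delta gamma lam nu)
      = (\<Sum>l. w l * (\<integral>z. convM Delta gamma lam nu f (gamma * Delta + z) \<partial>Q l))"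
    by (rule lawP_integral[OF convM_meas[OF f B] convM_bound[OF f B]])
  also have "\<dots> = (\<Sum>l. Delta ^ l / fact l * (\<Sum>k. (-Delta)^k / fact k * a (l + k)))"
  proof -
    have "w l * exp (lam * Delta) = Delta ^ l / fact l" for l
      unfolding w_def by (simp add: exp_minus field_simps)
    then show ?thesis unfolding int_convM_Q[OF f B] a_def by (simp add: mult.assoc[symmetric])
  qed
  also have "\<dots> = a 0"
    by (rule double_exp_sum[where L=lam and B=B]) (use Delta lam ab in auto)
  also have "\<dots> = f 0"
    unfolding a_def by (simp add: integral_return f)
  finally show ?thesis .
qed

lemma shift_null:
  fixes N :: "real set"
  assumes N: "N \<in> null_sets lborel"
  shows "{x. x + j \<in> N} \<in> null_sets lborel"
proof -
  have Nb: "N \<in> sets borel" using N by (simp add: null_sets_def)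
  have e: "{x. x + j \<in> N} = (+) j -` N \<inter> space lborel" by (auto simp: add.commute)
  have "emeasure lborel ((+) j -` N \<inter> space lborel) = emeasure (distr lborel borel ((+) j)) N"
    using Nb by (subst emeasure_distr) auto
  also have "\<dots> = 0" using null_setsD1[OF N] by (simp add: lborel_distr_plus)
  moreover have "(+) j -` N \<inter> space lborel \<in> sets lborel"
    using measurable_sets_borel[OF _ Nb, of "(+) j"] by simp
  ultimately show ?thesis unfolding e by (auto simp: null_sets_def)
qed

context
  fixes q :: "int \<Rightarrow> real" and nu_ac :: "real measure"
  assumes q_nn: "\<forall>j. q j \<ge> 0" and ac_sets: "sets nu_ac = sets borel"
    and ac: "absolutely_continuous lborel nu_ac"
    and dec: "\<forall>A \<in> sets borel. emeasure nu A =
              (\<integral>\<^sup>+ j. ennreal (q j) * indicator A (real_of_int j) \<partial>count_space (UNIV - {0}))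
              + emeasure nu_ac A"
begin

lemma Q_null: "N \<in> null_sets lborel \<Longrightarrow> N \<inter> \<int> = {} \<Longrightarrow> emeasure (Q m) N = 0"
proof (induction m arbitrary: N)
  case 0
  have Nb: "N \<in> sets borel" using 0 by (simp add: null_sets_def)
  have "0 \<notin> N" using 0 by auto
  then show ?case using Nb by (simp add: emeasure_return)
next
  case (Suc m)
  have Nb[measurable]: "N \<in> sets borel" using Suc by (simp add: null_sets_def)
  interpret Qm: finite_measure "Q m" by (rule Q_fin)
  interpret LQ: pair_sigma_finite lborel "Q m" ..
  define psi where "psi x = (\<integral>\<^sup>+y. indicator N (x + y) \<partial>Q m)" for x
  have se: "sets (borel \<Otimes>\<^sub>M Q m) = sets (borel \<Otimes>\<^sub>M borel)" by (rule sets_pair_measure_cong) (simp_all add: Q_sets)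
  have se2: "sets (lborel \<Otimes>\<^sub>M Q m) = sets (borel \<Otimes>\<^sub>M borel)" by (rule sets_pair_measure_cong) (simp_all add: Q_sets)
  have pm: "(\<lambda>(x, y). indicator N (x + y) :: ennreal) \<in> borel_measurable (borel \<Otimes>\<^sub>M borel)" by measurable
  have psi_m: "psi \<in> borel_measurable borel"
  proof -
    have "(\<lambda>(x, y). indicator N (x + y) :: ennreal) \<in> borel_measurable (borel \<Otimes>\<^sub>M Q m)"
      unfolding measurable_cong_sets[OF se refl] by (rule pm)
    from Qm.borel_measurable_nn_integral[OF this] show ?thesis unfolding psi_def by simp
  qed
  have psi_int: "psi (real_of_int j) = 0" for j
  proof -
    let ?N' = "{y. y + real_of_int j \<in> N}"
    have n': "?N' \<in> null_sets lborel" by (rule shift_null[OF Suc.prems(1)])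
    have d': "?N' \<inter> \<int> = {}"
    proof (rule ccontr)
      assume "?N' \<inter> \<int> \<noteq> {}"
      then obtain y where y: "y \<in> \<int>" "y + real_of_int j \<in> N" by auto
      then have "y + real_of_int j \<in> \<int>" by auto
      with y(2) Suc.prems(2) show False by auto
    qed
    have "?N' \<in> sets borel" using n' by (simp add: null_sets_def)
    then have sN': "?N' \<in> sets (Q m)" by (simp add: Q_sets)
    have ind: "(\<lambda>y. indicator N (real_of_int j + y) :: ennreal) = indicator ?N'"
      by (auto simp: indicator_def add.commute fun_eq_iff)
    have "psi (real_of_int j) = emeasure (Q m) ?N'"
      unfolding psi_def ind using sN' by simp
    then show ?thesis using Suc.IH[OF n' d'] by simp
  qed
  define S where "S = {x. psi x \<noteq> 0}"
  have Sb: "S \<in> sets borel" unfolding S_def using psi_m by measurable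
  have "(\<integral>\<^sup>+x. psi x \<partial>lborel) = (\<integral>\<^sup>+x. \<integral>\<^sup>+y. indicator N (x + y) \<partial>Q m \<partial>lborel)" by (simp add: psi_def)
  also have "\<dots> = (\<integral>\<^sup>+y. \<integral>\<^sup>+x. indicator N (x + y) \<partial>lborel \<partial>Q m)"
    by (rule LQ.Fubini'[symmetric]) (simp add: measurable_cong_sets[OF se2 refl] pm)
  also have "\<dots> = (\<integral>\<^sup>+y. 0 \<partial>Q m)"
  proof (rule nn_integral_cong)
    fix y
    have n: "{x. x + y \<in> N} \<in> null_sets lborel" by (rule shift_null[OF Suc.prems(1)])
    then have "{x. x + y \<in> N} \<in> sets borel" by (simp add: null_sets_def)
    moreover have "(\<lambda>x. indicator N (x + y) :: ennreal) = indicator {x. x + y \<in> N}"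
      by (auto simp: indicator_def fun_eq_iff)
    ultimately have "(\<integral>\<^sup>+x. indicator N (x + y) \<partial>lborel) = emeasure lborel {x. x + y \<in> N}"
      by simp
    then show "(\<integral>\<^sup>+x. indicator N (x + y) \<partial>lborel) = 0" using null_setsD1[OF n] by simp
  qed
  finally have "(\<integral>\<^sup>+x. psi x \<partial>lborel) = 0" by simp
  then have "AE x in lborel. psi x = 0" using nn_integral_0_iff_AE[of psi lborel] psi_m by simp
  then have "emeasure lborel S = 0" using Sb by (subst AE_iff_measurable[symmetric]) (auto simp: S_def)
  then have S0: "S \<in> null_sets lborel" using Sb by (simp add: null_sets_def)
  have ac0: "emeasure nu_ac S = 0" using ac S0 unfolding absolutely_continuous_def by auto
  have "emeasure nu S = (\<integral>\<^sup>+ j. ennreal (q j) * indicator S (real_of_int j) \<partial>count_space (UNIV - {0})) + emeasure nu_ac S"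
    using dec Sb by blast
  also have "\<dots> = 0" using ac0 psi_int by (simp add: S_def)
  finally have nuS: "emeasure nu S = 0" .
  have "AE x in nu. psi x = 0"
    using Sb nuS by (subst AE_iff_measurable[where N=S]) (auto simp: S_def nu_sets sets_eq_imp_space_eq[OF nu_sets])
  then have "(\<integral>\<^sup>+x. psi x \<partial>nu) = 0"
    by (subst nn_integral_0_iff_AE) (auto simp: measurable_cong_sets[OF nu_sets refl] psi_m)
  moreover have "emeasure (Q (Suc m)) N = (\<integral>\<^sup>+x. psi x \<partial>nu)"
    unfolding psi_def using nu_fin nu_sets Q_fin Q_sets by (simp add: convolution_emeasure')
  ultimately show ?case by simp
qed


lemma convM_AE:
  assumes f: "f \<in> borel_measurable borel" and fB: "\<And>x. \<bar>f x\<bar> \<le> B"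
    and g: "g \<in> borel_measurable borel" and gB: "\<And>x. \<bar>g x\<bar> \<le> B"
    and N: "N \<in> null_sets lborel" and NZ: "N \<inter> \<int> = {}"
    and eq: "\<And>x. x \<notin> N \<Longrightarrow> f x = g x"
  shows "AE x in lawP Delta gamma lam nu. convM Delta gamma lam nu f x = convM Delta gamma lam nu g x"
proof -
  have Nb[measurable]: "N \<in> sets borel" using N by (simp add: null_sets_def)
  define S where "S = {x. convM Delta gamma lam nu f x \<noteq> convM Delta gamma lam nu g x}"
  have Sb[measurable]: "S \<in> sets borel" unfolding S_def using convM_meas[OF f fB] convM_meas[OF g gB] by measurable
  define phi where "phi k z = (\<integral>\<^sup>+w. indicator N (z + w) \<partial>Q k)" for k z
  have phi_m: "phi k \<in> borel_measurable borel" for k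
  proof -
    interpret Qk: finite_measure "Q k" by (rule Q_fin)
    have se: "sets (borel \<Otimes>\<^sub>M Q k) = sets (borel \<Otimes>\<^sub>M borel)" by (rule sets_pair_measure_cong) (simp_all add: Q_sets)
    have "(\<lambda>(x, y). indicator N (x + y) :: ennreal) \<in> borel_measurable (borel \<Otimes>\<^sub>M Q k)"
      unfolding measurable_cong_sets[OF se refl] by measurable
    from Qk.borel_measurable_nn_integral[OF this] show ?thesis unfolding phi_def by simp
  qed
  have Sl: "emeasure (Q l) {y. gamma * Delta + y \<in> S} = 0" for l
  proof -
    have bad: "AE z in Q l. phi k z = 0" for k
    proof -
      have "(\<integral>\<^sup>+z. phi k z \<partial>Q l) = emeasure (convolution (Q l) (Q k)) N"
        unfolding phi_def by (rule convolution_emeasure'[symmetric]) (simp_all add: Q_fin Q_sets)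
      also have "\<dots> = 0" unfolding Q_conv by (rule Q_null[OF N NZ])
      finally show ?thesis
        using nn_integral_0_iff_AE[of "phi k" "Q l"] phi_m by (simp add: measurable_cong_sets[OF Q_sets refl])
    qed
    then have "AE z in Q l. \<forall>k. phi k z = 0" by (simp add: AE_all_countable)
    then have "AE z in Q l. gamma * Delta + z \<notin> S"
    proof (rule AE_mp, intro AE_I2 impI)
      fix z assume z: "\<forall>k. phi k z = 0"
      have "Ik f (gamma * Delta + z) k = Ik g (gamma * Delta + z) k" for k
      proof -
        have "AE w in Q k. indicator N (z + w) = (0::ennreal)"
        proof -
          have "(\<lambda>w. indicator N (z + w) :: ennreal) \<in> borel_measurable (Q k)"
            by (simp add: measurable_cong_sets[OF Q_sets refl])
          then show ?thesis using z nn_integral_0_iff_AE unfolding phi_def by blast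
        qed
        then have "AE w in Q k. f (z + w) = g (z + w)"
          by (rule AE_mp) (auto intro!: AE_I2 eq simp: indicator_def split: if_splits)
        then have "(\<integral>w. f (z + w) \<partial>Q k) = (\<integral>w. g (z + w) \<partial>Q k)"
          by (intro integral_cong_AE Qshift_meas f g)
        then show ?thesis by (simp add: Ik_eq[OF f] Ik_eq[OF g])
      qed
      then show "gamma * Delta + z \<notin> S" unfolding S_def by (simp add: convM_eq)
    qed
    moreover have "{y. gamma * Delta + y \<in> S} \<in> sets (Q l)"
      using measurable_sets_borel[OF _ Sb, of "\<lambda>y. gamma * Delta + y"] by (simp add: Q_sets vimage_def)
    ultimately show ?thesis
      by (subst (asm) AE_iff_measurable[where N="{y. gamma * Delta + y \<in> S}"]) (auto simp: Q_space)
  qed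
  have "emeasure (lawP Delta gamma lam nu) S = 0"
    by (simp add: lawP_emeasure Sl)
  then show ?thesis
    using Sb by (subst AE_iff_measurable[where N=S]) (auto simp: S_def sets_eq_imp_space_eq[OF lawP_sets])
qed
end
end

lemma Kh_props:
  fixes K :: "real \<Rightarrow> real"
  assumes K_int: "integrable lborel K" and h: "h > 0"
  shows "integrable lborel (Kh K h)" and "(\<integral>y. \<bar>Kh K h y\<bar> \<partial>lborel) = (\<integral>y. \<bar>K y\<bar> \<partial>lborel)"
proof -
  have e: "Kh K h = (\<lambda>y. (1/h) * K (0 + (1/h) * y))" by (auto simp: Kh_def fun_eq_iff)
  show "integrable lborel (Kh K h)" unfolding e
    using lborel_integrable_real_affine[OF K_int, of "1/h" 0] h by (intro integrable_mult_right) auto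
  have ia: "integrable lborel (\<lambda>y. \<bar>K y\<bar>)" using K_int by (rule integrable_abs)
  have "(\<integral>y. \<bar>K y\<bar> \<partial>lborel) = \<bar>1/h\<bar> *\<^sub>R (\<integral>y. \<bar>K (0 + (1/h) * y)\<bar> \<partial>lborel)"
    using h by (intro lborel_integral_real_affine) auto
  also have "\<dots> = (\<integral>y. (1/h) * \<bar>K (0 + (1/h) * y)\<bar> \<partial>lborel)" using h by simp
  also have "\<dots> = (\<integral>y. \<bar>Kh K h y\<bar> \<partial>lborel)"
  proof -
    have "(\<lambda>y. (1/h) * \<bar>K (0 + (1/h) * y)\<bar>) = (\<lambda>y. \<bar>Kh K h y\<bar>)"
      using h by (auto simp: Kh_def abs_mult abs_divide fun_eq_iff)
    then show ?thesis by simp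
  qed
  finally show "(\<integral>y. \<bar>Kh K h y\<bar> \<partial>lborel) = (\<integral>y. \<bar>K y\<bar> \<partial>lborel)" by simp
qed

lemma convfun_props:
  fixes K g :: "real \<Rightarrow> real"
  assumes K_meas: "K \<in> borel_measurable borel" and K_int: "integrable lborel K" and h: "h > 0"
    and g: "g \<in> borel_measurable borel" and C: "\<And>x. \<bar>g x\<bar> \<le> C"
  shows "convfun g (Kh K h) \<in> borel_measurable borel"
    and "\<bar>convfun g (Kh K h) x\<bar> \<le> C * (\<integral>y. \<bar>K y\<bar> \<partial>lborel)"
proof -
  have Khm[measurable]: "Kh K h \<in> borel_measurable borel" unfolding Kh_def using K_meas by measurable
  have se: "sets (borel \<Otimes>\<^sub>M lborel) = sets (borel \<Otimes>\<^sub>M borel)" by (rule sets_pair_measure_cong) simp_all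
  have "(\<lambda>(x, y). g (x - y) * Kh K h y) \<in> borel_measurable (borel \<Otimes>\<^sub>M lborel)"
    unfolding measurable_cong_sets[OF se refl] using g by measurable
  from lborel.borel_measurable_lebesgue_integral[OF this]
  show "convfun g (Kh K h) \<in> borel_measurable borel" unfolding convfun_def[abs_def] by simp
  have C0: "C \<ge> 0" using C[of 0] by simp
  note KhI = Kh_props[OF K_int h]
  have i1: "integrable lborel (\<lambda>y. C * \<bar>Kh K h y\<bar>)" using KhI(1) by (intro integrable_mult_right integrable_abs)
  have i2: "integrable lborel (\<lambda>y. g (x - y) * Kh K h y)"
  proof (rule Bochner_Integration.integrable_bound[OF i1])
    show "(\<lambda>y. g (x - y) * Kh K h y) \<in> borel_measurable lborel" using g by measurable
    show "AE y in lborel. norm (g (x - y) * Kh K h y) \<le> norm (C * \<bar>Kh K h y\<bar>)"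
      using C C0 by (intro AE_I2) (auto simp: abs_mult intro!: mult_right_mono)
  qed
  have "\<bar>convfun g (Kh K h) x\<bar> \<le> (\<integral>y. C * \<bar>Kh K h y\<bar> \<partial>lborel)"
    unfolding convfun_def
    by (rule integral_abs_bound_integral[OF i2 i1]) (use C C0 in \<open>auto simp: abs_mult intro!: mult_right_mono\<close>)
  also have "\<dots> = C * (\<integral>y. \<bar>K y\<bar> \<partial>lborel)" using KhI(2) by simp
  finally show "\<bar>convfun g (Kh K h) x\<bar> \<le> C * (\<integral>y. \<bar>K y\<bar> \<partial>lborel)" .
qed

lemma ereal_lim_bounded:
  fixes f :: "nat \<Rightarrow> real"
  assumes lim: "(\<lambda>n. ereal (f n)) \<longlonglongrightarrow> G" and B: "\<And>n. \<bar>f n\<bar> \<le> B"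
  shows "\<bar>G\<bar> \<noteq> \<infinity>" and "f \<longlonglongrightarrow> real_of_ereal G" and "\<bar>real_of_ereal G\<bar> \<le> B"
proof -
  have lb: "ereal (- B) \<le> ereal (f n)" and ub: "ereal (f n) \<le> ereal B" for n
    using B[of n] by (auto simp: abs_le_iff)
  have lo: "ereal (- B) \<le> G" by (rule LIMSEQ_le_const[OF lim]) (use lb in blast)
  have hi: "G \<le> ereal B" by (rule LIMSEQ_le_const2[OF lim]) (use ub in blast)
  show fin: "\<bar>G\<bar> \<noteq> \<infinity>" using lo hi by auto
  have "G = ereal (real_of_ereal G)" using fin by (simp add: ereal_real')
  then show "f \<longlonglongrightarrow> real_of_ereal G" using lim by (metis lim_ereal)
  show "\<bar>real_of_ereal G\<bar> \<le> B" using lo hi fin by (cases G) auto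
qed

theorem lemma3p4:
  fixes Delta gamma lam :: real and nu :: "real measure"
    and K :: "real \<Rightarrow> real" and h :: "nat \<Rightarrow> real"
    and g1 g2 :: "nat \<Rightarrow> real \<Rightarrow> real" and G1 G2 :: "real \<Rightarrow> ereal"
  assumes Delta: "Delta > 0" and lam: "lam > 0"
    and nu_fin: "finite_measure nu" and nu_sets: "sets nu = sets borel"
    and nu_mass: "measure nu UNIV = lam"
    and K_sym: "\<And>x. K (- x) = K x"
    and K_meas: "K \<in> borel_measurable borel" and K_int: "integrable lborel K"
    and K_supp: "closure {u. fourier K u \<noteq> 0} \<subseteq> {-1..1}"
    and h_pos: "\<And>n. h n > 0" and h_lim: "h \<longlonglongrightarrow> 0"
    and g1_meas: "\<And>n. g1 n \<in> borel_measurable borel"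
    and g2_meas: "\<And>n. g2 n \<in> borel_measurable borel"
    and g1_L2: "\<And>n. integrable lborel (\<lambda>x. (g1 n x)\<^sup>2)"
    and g2_L2: "\<And>n. integrable lborel (\<lambda>x. (g2 n x)\<^sup>2)"
    and g1_bdd: "\<exists>C. \<forall>n x. \<bar>g1 n x\<bar> \<le> C"
    and g2_bdd: "\<exists>C. \<forall>n x. \<bar>g2 n x\<bar> \<le> C"
    and G1_lim: "\<And>x. (\<lambda>n. ereal (convfun (g1 n) (Kh K (h n)) x)) \<longlonglongrightarrow> G1 x"
    and G2_lim: "\<And>x. (\<lambda>n. ereal (convfun (g2 n) (Kh K (h n)) x)) \<longlonglongrightarrow> G2 x"
  shows
    "(\<forall>x. \<bar>G1 x\<bar> \<noteq> \<infinity>) \<and> (\<forall>x. \<bar>G2 x\<bar> \<noteq> \<infinity>)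
     \<and> (\<lambda>n. \<integral>x. convM Delta gamma lam nu (convfun (g1 n) (Kh K (h n))) x
                 * convM Delta gamma lam nu (convfun (g2 n) (Kh K (h n))) x \<partial>lawP Delta gamma lam nu)
        \<longlonglongrightarrow> (\<integral>x. convM Delta gamma lam nu (\<lambda>y. real_of_ereal (G1 y)) x
                 * convM Delta gamma lam nu (\<lambda>y. real_of_ereal (G2 y)) x \<partial>lawP Delta gamma lam nu)
     \<and> (\<lambda>n. \<integral>x. convM Delta gamma lam nu (convfun (g1 n) (Kh K (h n))) x \<partial>lawP Delta gamma lam nu)
        \<longlonglongrightarrow> real_of_ereal (G1 0)
     \<and> (\<lambda>n. convfun (g1 n) (Kh K (h n)) 0) \<longlonglongrightarrow> real_of_ereal (G1 0)
     \<and> (\<lambda>n. \<integral>x. convM Delta gamma lam nu (convfun (g2 n) (Kh K (h n))) x \<partial>lawP Delta gamma lam nu)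
        \<longlonglongrightarrow> real_of_ereal (G2 0)
     \<and> (\<lambda>n. convfun (g2 n) (Kh K (h n)) 0) \<longlonglongrightarrow> real_of_ereal (G2 0)
     \<and> (\<forall>(q :: int \<Rightarrow> real) (nu_ac :: real measure) (gt1 :: real \<Rightarrow> real) (gt2 :: real \<Rightarrow> real)
          (N1 :: real set) (N2 :: real set).
          (\<forall>j. q j \<ge> 0) \<longrightarrow> sets nu_ac = sets borel \<longrightarrow> absolutely_continuous lborel nu_ac \<longrightarrow>
          (\<forall>A \<in> sets borel. emeasure nu A =
              (\<integral>\<^sup>+ j. ennreal (q j) * indicator A (real_of_int j) \<partial>count_space (UNIV - {0}))
              + emeasure nu_ac A) \<longrightarrow>
          gt1 \<in> borel_measurable borel \<longrightarrow> gt2 \<in> borel_measurable borel \<longrightarrow>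
          (\<exists>C. \<forall>x. \<bar>gt1 x\<bar> \<le> C) \<longrightarrow> (\<exists>C. \<forall>x. \<bar>gt2 x\<bar> \<le> C) \<longrightarrow>
          N1 \<in> null_sets lborel \<longrightarrow> N2 \<in> null_sets lborel \<longrightarrow>
          N1 \<inter> \<int> = {} \<longrightarrow> N2 \<inter> \<int> = {} \<longrightarrow>
          (\<forall>x. x \<notin> N1 \<longrightarrow> gt1 x = real_of_ereal (G1 x)) \<longrightarrow>
          (\<forall>x. x \<notin> N2 \<longrightarrow> gt2 x = real_of_ereal (G2 x)) \<longrightarrow>
          (\<integral>x. convM Delta gamma lam nu gt1 x * convM Delta gamma lam nu gt2 x \<partial>lawP Delta gamma lam nu)
          = (\<integral>x. convM Delta gamma lam nu (\<lambda>y. real_of_ereal (G1 y)) x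
                 * convM Delta gamma lam nu (\<lambda>y. real_of_ereal (G2 y)) x \<partial>lawP Delta gamma lam nu))"
proof -
  obtain C1 where C1: "\<And>n x. \<bar>g1 n x\<bar> \<le> C1" using g1_bdd by blast
  obtain C2 where C2: "\<And>n x. \<bar>g2 n x\<bar> \<le> C2" using g2_bdd by blast
  define AK where "AK = (\<integral>y. \<bar>K y\<bar> \<partial>lborel)"
  define f1 where "f1 n = convfun (g1 n) (Kh K (h n))" for n
  define f2 where "f2 n = convfun (g2 n) (Kh K (h n))" for n
  define G1r where "G1r x = real_of_ereal (G1 x)" for x
  define G2r where "G2r x = real_of_ereal (G2 x)" for x
  have f1m: "f1 n \<in> borel_measurable borel" for n
    unfolding f1_def by (rule convfun_props(1)[OF K_meas K_int h_pos g1_meas C1])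
  have f2m: "f2 n \<in> borel_measurable borel" for n
    unfolding f2_def by (rule convfun_props(1)[OF K_meas K_int h_pos g2_meas C2])
  have f1b: "\<bar>f1 n x\<bar> \<le> C1 * AK" for n x
    unfolding f1_def AK_def by (rule convfun_props(2)[OF K_meas K_int h_pos g1_meas C1])
  have f2b: "\<bar>f2 n x\<bar> \<le> C2 * AK" for n x
    unfolding f2_def AK_def by (rule convfun_props(2)[OF K_meas K_int h_pos g2_meas C2])
  have L1: "(\<lambda>n. ereal (f1 n x)) \<longlonglongrightarrow> G1 x" for x unfolding f1_def by (rule G1_lim)
  have L2: "(\<lambda>n. ereal (f2 n x)) \<longlonglongrightarrow> G2 x" for x unfolding f2_def by (rule G2_lim)
  note E1 = ereal_lim_bounded[OF L1 f1b] and E2 = ereal_lim_bounded[OF L2 f2b]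
  have T1: "(\<lambda>n. f1 n x) \<longlonglongrightarrow> G1r x" for x unfolding G1r_def by (rule E1(2))
  have T2: "(\<lambda>n. f2 n x) \<longlonglongrightarrow> G2r x" for x unfolding G2r_def by (rule E2(2))
  have G1b: "\<bar>G1r x\<bar> \<le> C1 * AK" for x unfolding G1r_def by (rule E1(3))
  have G2b: "\<bar>G2r x\<bar> \<le> C2 * AK" for x unfolding G2r_def by (rule E2(3))
  have G1m: "G1r \<in> borel_measurable borel"
    by (rule borel_measurable_LIMSEQ_real[OF T1 f1m])
  have G2m: "G2r \<in> borel_measurable borel"
    by (rule borel_measurable_LIMSEQ_real[OF T2 f2m])
  interpret cpp Delta gamma lam nu
    by (rule cpp.intro[OF Delta lam nu_fin nu_sets nu_mass])
  let ?P = "lawP Delta gamma lam nu"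
  let ?M = "convM Delta gamma lam nu"
  interpret P: finite_measure ?P by (rule lawP_finite)
  have Pm: "\<And>F. F \<in> borel_measurable borel \<Longrightarrow> F \<in> borel_measurable ?P"
    by (simp add: measurable_cong_sets[OF lawP_sets refl])
  have part2: "(\<lambda>n. \<integral>x. ?M (f1 n) x * ?M (f2 n) x \<partial>?P) \<longlonglongrightarrow> (\<integral>x. ?M G1r x * ?M G2r x \<partial>?P)"
  proof (rule integral_dominated_convergence[where w="\<lambda>_. CB (C1 * AK) * CB (C2 * AK)"])
    show "(\<lambda>x. ?M G1r x * ?M G2r x) \<in> borel_measurable ?P"
      using convM_meas[OF G1m G1b] convM_meas[OF G2m G2b] by (intro Pm) measurable
    show "(\<lambda>x. ?M (f1 n) x * ?M (f2 n) x) \<in> borel_measurable ?P" for n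
      using convM_meas[OF f1m f1b] convM_meas[OF f2m f2b] by (intro Pm) measurable
    show "integrable ?P (\<lambda>_. CB (C1 * AK) * CB (C2 * AK))" by simp
    show "AE x in ?P. (\<lambda>n. ?M (f1 n) x * ?M (f2 n) x) \<longlonglongrightarrow> ?M G1r x * ?M G2r x"
      by (intro AE_I2 tendsto_mult convM_tendsto[OF f1m f1b G1m T1] convM_tendsto[OF f2m f2b G2m T2])
    show "AE x in ?P. norm (?M (f1 n) x * ?M (f2 n) x) \<le> CB (C1 * AK) * CB (C2 * AK)" for n
    proof (intro AE_I2)
      fix x
      have a: "\<bar>?M (f1 n) x\<bar> \<le> CB (C1 * AK)" by (rule convM_bound[OF f1m f1b])
      have b: "\<bar>?M (f2 n) x\<bar> \<le> CB (C2 * AK)" by (rule convM_bound[OF f2m f2b])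
      show "norm (?M (f1 n) x * ?M (f2 n) x) \<le> CB (C1 * AK) * CB (C2 * AK)"
        unfolding real_norm_def abs_mult by (rule mult_mono[OF a b]) (use a in auto)
    qed
  qed
  have part3a: "(\<lambda>n. \<integral>x. ?M (f1 n) x \<partial>?P) \<longlonglongrightarrow> G1r 0"
    by (simp add: int_convM[OF f1m f1b] T1)
  have part3b: "(\<lambda>n. \<integral>x. ?M (f2 n) x \<partial>?P) \<longlonglongrightarrow> G2r 0"
    by (simp add: int_convM[OF f2m f2b] T2)
  have part5: "\<forall>(q :: int \<Rightarrow> real) (nu_ac :: real measure) (gt1 :: real \<Rightarrow> real) (gt2 :: real \<Rightarrow> real)
          (N1 :: real set) (N2 :: real set).
          (\<forall>j. q j \<ge> 0) \<longrightarrow> sets nu_ac = sets borel \<longrightarrow> absolutely_continuous lborel nu_ac \<longrightarrow>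
          (\<forall>A \<in> sets borel. emeasure nu A =
              (\<integral>\<^sup>+ j. ennreal (q j) * indicator A (real_of_int j) \<partial>count_space (UNIV - {0}))
              + emeasure nu_ac A) \<longrightarrow>
          gt1 \<in> borel_measurable borel \<longrightarrow> gt2 \<in> borel_measurable borel \<longrightarrow>
          (\<exists>C. \<forall>x. \<bar>gt1 x\<bar> \<le> C) \<longrightarrow> (\<exists>C. \<forall>x. \<bar>gt2 x\<bar> \<le> C) \<longrightarrow>
          N1 \<in> null_sets lborel \<longrightarrow> N2 \<in> null_sets lborel \<longrightarrow>
          N1 \<inter> \<int> = {} \<longrightarrow> N2 \<inter> \<int> = {} \<longrightarrow>
          (\<forall>x. x \<notin> N1 \<longrightarrow> gt1 x = G1r x) \<longrightarrow>
          (\<forall>x. x \<notin> N2 \<longrightarrow> gt2 x = G2r x) \<longrightarrow>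
          (\<integral>x. ?M gt1 x * ?M gt2 x \<partial>?P) = (\<integral>x. ?M G1r x * ?M G2r x \<partial>?P)"
  proof (intro allI impI)
    fix q :: "int \<Rightarrow> real" and nu_ac :: "real measure" and gt1 gt2 :: "real \<Rightarrow> real" and N1 N2 :: "real set"
    assume q_nn: "\<forall>j. q j \<ge> 0" and ac_sets: "sets nu_ac = sets borel"
      and ac: "absolutely_continuous lborel nu_ac"
      and dec: "\<forall>A \<in> sets borel. emeasure nu A =
              (\<integral>\<^sup>+ j. ennreal (q j) * indicator A (real_of_int j) \<partial>count_space (UNIV - {0}))
              + emeasure nu_ac A"
      and gt1m: "gt1 \<in> borel_measurable borel" and gt2m: "gt2 \<in> borel_measurable borel"
      and gt1b: "\<exists>C. \<forall>x. \<bar>gt1 x\<bar> \<le> C" and gt2b: "\<exists>C. \<forall>x. \<bar>gt2 x\<bar> \<le> C"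
      and N1: "N1 \<in> null_sets lborel" and N2: "N2 \<in> null_sets lborel"
      and N1Z: "N1 \<inter> \<int> = {}" and N2Z: "N2 \<inter> \<int> = {}"
      and eq1: "\<forall>x. x \<notin> N1 \<longrightarrow> gt1 x = G1r x" and eq2: "\<forall>x. x \<notin> N2 \<longrightarrow> gt2 x = G2r x"
    obtain D1 where D1: "\<And>x. \<bar>gt1 x\<bar> \<le> D1" using gt1b by blast
    obtain D2 where D2: "\<And>x. \<bar>gt2 x\<bar> \<le> D2" using gt2b by blast
    define B1 where "B1 = max D1 (C1 * AK)"
    define B2 where "B2 = max D2 (C2 * AK)"
    have gt1B: "\<bar>gt1 x\<bar> \<le> B1" and G1B: "\<bar>G1r x\<bar> \<le> B1" for x
      unfolding B1_def using D1[of x] G1b[of x] by auto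
    have gt2B: "\<bar>gt2 x\<bar> \<le> B2" and G2B: "\<bar>G2r x\<bar> \<le> B2" for x
      unfolding B2_def using D2[of x] G2b[of x] by auto
    have A1: "AE x in ?P. ?M gt1 x = ?M G1r x"
      by (rule convM_AE[OF q_nn ac_sets ac dec gt1m gt1B G1m G1B N1 N1Z]) (use eq1 in auto)
    have A2: "AE x in ?P. ?M gt2 x = ?M G2r x"
      by (rule convM_AE[OF q_nn ac_sets ac dec gt2m gt2B G2m G2B N2 N2Z]) (use eq2 in auto)
    show "(\<integral>x. ?M gt1 x * ?M gt2 x \<partial>?P) = (\<integral>x. ?M G1r x * ?M G2r x \<partial>?P)"
    proof (rule integral_cong_AE)
      show "(\<lambda>x. ?M gt1 x * ?M gt2 x) \<in> borel_measurable ?P"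
        using convM_meas[OF gt1m gt1B] convM_meas[OF gt2m gt2B] by (intro Pm) measurable
      show "(\<lambda>x. ?M G1r x * ?M G2r x) \<in> borel_measurable ?P"
        using convM_meas[OF G1m G1b] convM_meas[OF G2m G2b] by (intro Pm) measurable
      show "AE x in ?P. ?M gt1 x * ?M gt2 x = ?M G1r x * ?M G2r x"
        using A1 A2 by eventually_elim simp
    qed
  qed
  have F1: "\<forall>x. \<bar>G1 x\<bar> \<noteq> \<infinity>" using E1(1) by blast
  have F2: "\<forall>x. \<bar>G2 x\<bar> \<noteq> \<infinity>" using E2(1) by blast
  note p2 = part2[unfolded f1_def f2_def G1r_def G2r_def]
  note p3a = part3a[unfolded f1_def G1r_def]
  note p3b = part3b[unfolded f2_def G2r_def]
  note p4a = T1[of 0, unfolded f1_def G1r_def]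
  note p4b = T2[of 0, unfolded f2_def G2r_def]
  note p5 = part5[unfolded G1r_def G2r_def]
  show ?thesis
    by (intro conjI F1 F2 p2 p3a p3b p4a p4b p5)
qed

end
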